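(* Let $\sigma$ be an erasing $k$-block substitution with $w_\epsilon\ne1^k$ that satisfies the optimality condition. Then the point $x_0=0.w_\epsilon^\infty$ is an almost fixed point of $f_\sigma$.
   Context: Notation: $\mathbb I=[0,1]$. $\{0,1\}^*$ and $\{0,1\}^\omega$ denote finite and infinite binary words, and $\epsilon$ is the empty word. For a word $w$, set $0.w=\sum_iw_i2^{-i}$. For $x\in(0,1]$, $\widetilde x$ is the unique infinite binary expansion of $x$ not ending in $0^\infty$. Fix $k\ge2$. An erasing $k$-block substitution is a map $\sigma:\{0,1\}^k\to\{0,1\}^*$ with exactly one block $w_\epsilon$ such that $\sigma(w_\epsilon)=\epsilon$. It acts blockwise on infinite words, concatenating the images of consecutive $k$-blocks. The map $f_\sigma:\mathbb I\to\mathbb I$ is defined by $f_\sigma(x)=0.\sigma(\widetilde x)$ if $x\in(0,1]$ and $\widetilde x\neq w_\epsilon^\infty$, and $f_\sigma(x)=0$ otherwise. Optimality condition: every $w\in\{0,1\}^\omega$ can be written as $w=\prod_{i\ge1}\sigma(b_i)$ with blocks $b_i\in\{0,1\}^k$ satisfying $\sigma(b_i)\ne\epsilon$. Almost fixed point: for $f:\mathbb I\to\mathbb I$ and $x\in\mathbb I$, set $R^-(f,x)=\{y:f^{-1}(y)\cap(x-\varepsilon,x)\ne\emptyset\ \forall\varepsilon>0\}$ and $R^+(f,x)=\{y:f^{-1}(y)\cap(x,x+\varepsilon)\ne\emptyset\ \forall\varepsilon>0\}$. The point $x$ is an almost fixed point of $f$ if $x$ belongs to the interior (in $\mathbb I$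 with its usual topology) of $R^-(f,x)$ or of $R^+(f,x)$. *)

theory Defs
  imports "HOL-Analysis.Analysis"
begin

text \<open>Binary words: a bit is a bool (True = 1). Finite words are bool lists,
infinite words are functions nat => bool (position n is the (n+1)-st digit).\<close>

definition bin_val :: "(nat \<Rightarrow> bool) \<Rightarrow> real" where
  "bin_val w = (\<Sum>n. (if w n then 1 else 0) * (1/2) ^ Suc n)"

text \<open>The unique infinite binary expansion of x in (0,1] not ending in 0^omega.\<close>
definition expansion :: "real \<Rightarrow> (nat \<Rightarrow> bool)" where
  "expansion x = (THE w. (\<forall>n. \<exists>m\<ge>n. w m) \<and> bin_val w = x)"

definition block :: "nat \<Rightarrow> (nat \<Rightarrow> bool) \<Rightarrow> nat \<Rightarrow> bool list" where
  "block k w i = map (\<lambda>j. w (i * k + j)) [0..<k]"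

text \<open>Concatenation u_0 u_1 u_2 ... of finite words. If the result is a finite
word it is padded with zeros (which does not change its binary value).\<close>
definition concat_word :: "(nat \<Rightarrow> bool list) \<Rightarrow> nat \<Rightarrow> bool" where
  "concat_word u n = (\<exists>i j. j < length (u i) \<and> n = (\<Sum>l<i. length (u l)) + j \<and> u i ! j)"

definition erasing_block_subst :: "nat \<Rightarrow> (bool list \<Rightarrow> bool list) \<Rightarrow> bool" where
  "erasing_block_subst k \<sigma> \<longleftrightarrow> (\<exists>!b. length b = k \<and> \<sigma> b = [])"

definition w_eps :: "nat \<Rightarrow> (bool list \<Rightarrow> bool list) \<Rightarrow> bool list" where
  "w_eps k \<sigma> = (THE b. length b = k \<and> \<sigma> b = [])"

definition omega_word :: "bool list \<Rightarrow> nat \<Rightarrow> bool" where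
  "omega_word u n = u ! (n mod length u)"

definition f_sigma :: "nat \<Rightarrow> (bool list \<Rightarrow> bool list) \<Rightarrow> real \<Rightarrow> real" where
  "f_sigma k \<sigma> x =
     (if 0 < x \<and> x \<le> 1 \<and> expansion x \<noteq> omega_word (w_eps k \<sigma>)
      then bin_val (concat_word (\<lambda>i. \<sigma> (block k (expansion x) i)))
      else 0)"

definition optimal :: "nat \<Rightarrow> (bool list \<Rightarrow> bool list) \<Rightarrow> bool" where
  "optimal k \<sigma> \<longleftrightarrow> (\<forall>w :: nat \<Rightarrow> bool. \<exists>b :: nat \<Rightarrow> bool list.
      (\<forall>i. length (b i) = k \<and> \<sigma> (b i) \<noteq> []) \<and> w = concat_word (\<lambda>i. \<sigma> (b i)))"

definition R_minus :: "(real \<Rightarrow> real) \<Rightarrow> real \<Rightarrow> real set" where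
  "R_minus f x = {y. \<forall>e>0. \<exists>t\<in>{0..1}. x - e < t \<and> t < x \<and> f t = y}"

definition R_plus :: "(real \<Rightarrow> real) \<Rightarrow> real \<Rightarrow> real set" where
  "R_plus f x = {y. \<forall>e>0. \<exists>t\<in>{0..1}. x < t \<and> t < x + e \<and> f t = y}"

definition almost_fixed_point :: "(real \<Rightarrow> real) \<Rightarrow> real \<Rightarrow> bool" where
  "almost_fixed_point f x \<longleftrightarrow>
     x \<in> (top_of_set {0..1}) interior_of (R_minus f x) \<or>
     x \<in> (top_of_set {0..1}) interior_of (R_plus f x)"

end

theory Submission
  imports Defs
begin


definition dg :: "(nat \<Rightarrow> bool) \<Rightarrow> nat \<Rightarrow> real" where
  "dg u n = (if u n then 1 else 0) * (1/2::real) ^ Suc n"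

lemma dg_nonneg: "0 \<le> dg u n" by (simp add: dg_def)
lemma dg_le: "dg u n \<le> (1/2) ^ Suc n" by (simp add: dg_def)

lemma geom_half: "(\<lambda>n. (1/2::real) ^ Suc n) sums 1"
proof -
  have "(\<lambda>n. (1/2::real) ^ n) sums (1 / (1 - 1/2))" by (rule geometric_sums) simp
  hence "(\<lambda>n. (1/2) * (1/2::real) ^ n) sums ((1/2) * (1 / (1 - 1/2)))" by (rule sums_mult)
  thus ?thesis by simp
qed

lemma dg_summable: "summable (dg u)"
  by (rule summable_comparison_test[of _ "\<lambda>n. (1/2::real) ^ Suc n"])
     (use dg_le dg_nonneg geom_half sums_summable in auto)

lemma bv_def2: "bin_val u = suminf (dg u)"
  unfolding bin_val_def dg_def by (rule refl)

lemma bv_nonneg: "0 \<le> bin_val u"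
  unfolding bv_def2 by (rule suminf_nonneg[OF dg_summable dg_nonneg])

lemma bv_le1: "bin_val u \<le> 1"
proof -
  have "suminf (dg u) \<le> suminf (\<lambda>n. (1/2::real) ^ Suc n)"
    by (rule suminf_le) (use dg_le dg_summable geom_half sums_summable in auto)
  thus ?thesis using geom_half sums_unique bv_def2 by metis
qed

lemma bv_ge_term: "u i \<Longrightarrow> (1/2) ^ Suc i \<le> bin_val u"
proof -
  assume "u i"
  have "sum (dg u) {i} \<le> suminf (dg u)"
    by (rule sum_le_suminf) (use dg_summable dg_nonneg in auto)
  thus ?thesis using \<open>u i\<close> by (simp add: bv_def2 dg_def)
qed

lemma bv_pos: assumes "u i" shows "0 < bin_val u"
proof -
  have "(0::real) < (1/2)^Suc i" by simp
  thus ?thesis using bv_ge_term[of u i, OF assms] by linarith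
qed

lemma bv_le_zero: "\<not> u i \<Longrightarrow> bin_val u \<le> 1 - (1/2) ^ Suc i"
proof -
  assume "\<not> u i"
  let ?g = "\<lambda>n. if n = i then (1/2::real) ^ Suc n else 0"
  have s: "?g sums ((1/2) ^ Suc i)" by (rule sums_single)
  have "(\<lambda>n. dg u n + ?g n) sums (bin_val u + (1/2) ^ Suc i)"
    unfolding bv_def2 by (rule sums_add[OF summable_sums[OF dg_summable] s])
  moreover have le: "\<And>n. dg u n + ?g n \<le> (1/2) ^ Suc n"
    using \<open>\<not> u i\<close> by (auto simp: dg_def)
  ultimately have "bin_val u + (1/2) ^ Suc i \<le> 1"
    using sums_le[OF le _ geom_half] by blast
  thus ?thesis by simp
qed

lemma bv_split: "bin_val u = (\<Sum>n<m. dg u n) + (1/2) ^ m * bin_val (\<lambda>n. u (n + m))"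
proof -
  have "bin_val u = (\<Sum>n. dg u (n + m)) + (\<Sum>n<m. dg u n)"
    unfolding bv_def2 by (rule suminf_split_initial_segment[OF dg_summable])
  moreover have "(\<Sum>n. dg u (n + m)) = (1/2) ^ m * bin_val (\<lambda>n. u (n + m))"
  proof -
    have "(\<lambda>n. dg u (n + m)) = (\<lambda>n. (1/2) ^ m * dg (\<lambda>n. u (n + m)) n)"
      by (auto simp: dg_def power_add)
    thus ?thesis unfolding bv_def2 using suminf_mult[OF dg_summable] by simp
  qed
  ultimately show ?thesis by simp
qed

lemma bv_diff_agree:
  assumes "\<forall>n<m. u n = v n"
  shows "bin_val u - bin_val v = (1/2)^m * (bin_val (\<lambda>n. u (n+m)) - bin_val (\<lambda>n. v (n+m)))"
proof -
  have "(\<Sum>n<m. dg u n) = (\<Sum>n<m. dg v n)"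
    by (rule sum.cong) (use assms in \<open>auto simp: dg_def\<close>)
  thus ?thesis using bv_split[of u m] bv_split[of v m] by (simp add: right_diff_distrib)
qed

lemma bv_close:
  assumes "\<forall>n<m. u n = v n"
  shows "\<bar>bin_val u - bin_val v\<bar> \<le> (1/2)^m"
proof -
  have "\<bar>bin_val (\<lambda>n. u (n+m)) - bin_val (\<lambda>n. v (n+m))\<bar> \<le> 1"
    using bv_nonneg[of "\<lambda>n. u (n+m)"] bv_le1[of "\<lambda>n. u (n+m)"]
      bv_nonneg[of "\<lambda>n. v (n+m)"] bv_le1[of "\<lambda>n. v (n+m)"] by (simp add: abs_le_iff)
  hence "(1/2::real)^m * \<bar>bin_val (\<lambda>n. u (n+m)) - bin_val (\<lambda>n. v (n+m))\<bar> \<le> (1/2)^m * 1"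
    by (intro mult_left_mono) auto
  thus ?thesis using bv_diff_agree[OF assms] by (simp add: abs_mult)
qed

lemma bv_first_diff:
  assumes "\<forall>n<j. u n = v n" "u j" "\<not> v j"
  shows "bin_val u - bin_val v = (1/2)^Suc j * (1 + bin_val (\<lambda>n. u (n + Suc j)) - bin_val (\<lambda>n. v (n + Suc j)))"
proof -
  have "(\<Sum>n<j. dg u n) = (\<Sum>n<j. dg v n)"
    by (rule sum.cong) (use assms in \<open>auto simp: dg_def\<close>)
  moreover have "dg u j = (1/2)^Suc j" "dg v j = 0" using assms by (auto simp: dg_def)
  ultimately show ?thesis using bv_split[of u "Suc j"] bv_split[of v "Suc j"]
    by (simp add: algebra_simps)
qed

lemma bv_less:
  assumes "\<forall>n<j. u n = v n" "u j" "\<not> v j" "j < i" "u i"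
  shows "bin_val v < bin_val u"
proof -
  have "0 < bin_val (\<lambda>n. u (n + Suc j))"
    by (rule bv_pos[of _ "i - Suc j"]) (use assms in auto)
  moreover have "bin_val (\<lambda>n. v (n + Suc j)) \<le> 1" by (rule bv_le1)
  ultimately have "0 < (1/2::real)^Suc j * (1 + bin_val (\<lambda>n. u (n + Suc j)) - bin_val (\<lambda>n. v (n + Suc j)))"
    by (intro mult_pos_pos) auto
  thus ?thesis using bv_first_diff[OF assms(1-3)] by linarith
qed

lemma bv_gap1:
  assumes "\<forall>n<j. u n = v n" "u j" "\<not> v j" "Suc j \<le> i" "i < Suc j + k" "\<not> v i"
  shows "(1/2)^(Suc j + k) \<le> bin_val u - bin_val v"
proof -
  have "bin_val (\<lambda>n. v (n + Suc j)) \<le> 1 - (1/2)^Suc (i - Suc j)"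
    by (rule bv_le_zero) (use assms in auto)
  moreover have "(1/2::real)^k \<le> (1/2)^Suc (i - Suc j)"
    by (rule power_decreasing) (use assms in auto)
  moreover have "0 \<le> bin_val (\<lambda>n. u (n + Suc j))" by (rule bv_nonneg)
  ultimately have "(1/2::real)^k \<le> 1 + bin_val (\<lambda>n. u (n + Suc j)) - bin_val (\<lambda>n. v (n + Suc j))"
    by linarith
  hence "(1/2::real)^Suc j * (1/2)^k \<le> (1/2)^Suc j * (1 + bin_val (\<lambda>n. u (n + Suc j)) - bin_val (\<lambda>n. v (n + Suc j)))"
    by (intro mult_left_mono) auto
  thus ?thesis using bv_first_diff[OF assms(1-3)] by (simp add: power_add)
qed

lemma bv_gap2:
  assumes "\<forall>n<j. u n = v n" "u j" "\<not> v j" "Suc j \<le> i" "i < Suc j + k" "u i"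
  shows "(1/2)^(Suc j + k) \<le> bin_val u - bin_val v"
proof -
  have "(1/2)^Suc (i - Suc j) \<le> bin_val (\<lambda>n. u (n + Suc j))"
    by (rule bv_ge_term) (use assms in auto)
  moreover have "(1/2::real)^k \<le> (1/2)^Suc (i - Suc j)"
    by (rule power_decreasing) (use assms in auto)
  moreover have "bin_val (\<lambda>n. v (n + Suc j)) \<le> 1" by (rule bv_le1)
  ultimately have "(1/2::real)^k \<le> 1 + bin_val (\<lambda>n. u (n + Suc j)) - bin_val (\<lambda>n. v (n + Suc j))"
    by linarith
  hence "(1/2::real)^Suc j * (1/2)^k \<le> (1/2)^Suc j * (1 + bin_val (\<lambda>n. u (n + Suc j)) - bin_val (\<lambda>n. v (n + Suc j)))"
    by (intro mult_left_mono) auto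
  thus ?thesis using bv_first_diff[OF assms(1-3)] by (simp add: power_add)
qed

lemma cylinder:
  assumes z: "\<forall>i. \<exists>i'. i \<le> i' \<and> i' < i + k \<and> \<not> V i'"
    and o: "(\<forall>i. \<exists>i'. i \<le> i' \<and> i' < i + k \<and> V i') \<or> (\<forall>i. \<not> V i)"
    and cl: "\<bar>bin_val u - bin_val V\<bar> < (1/2)^(L + k)"
  shows "\<forall>j<L. u j = V j"
proof (rule ccontr)
  assume "\<not> (\<forall>j<L. u j = V j)"
  hence "\<exists>j. j < L \<and> u j \<noteq> V j" by auto
  then obtain j where j: "j < L" "u j \<noteq> V j" and mn: "\<forall>m<j. \<not> (m < L \<and> u m \<noteq> V m)"
    using exists_least_iff[of "\<lambda>j. j < L \<and> u j \<noteq> V j"] by blast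
  have ag: "\<forall>n<j. u n = V n" using mn j by auto
  have pw: "(1/2::real)^(L + k) \<le> (1/2)^(Suc j + k)"
    by (rule power_decreasing) (use j in auto)
  show False
  proof (cases "u j")
    case True
    hence nv: "\<not> V j" using j by auto
    obtain i' where "Suc j \<le> i'" "i' < Suc j + k" "\<not> V i'" using z by blast
    from bv_gap1[OF ag True nv this] pw cl show False by linarith
  next
    case False
    hence vj: "V j" using j by auto
    then obtain i' where "Suc j \<le> i'" "i' < Suc j + k" "V i'" using o by blast
    from bv_gap2[of j V u, OF _ vj False this] ag pw cl show False by auto
  qed
qed

lemma floor_double: "\<lfloor>2 * (t::real)\<rfloor> = 2 * \<lfloor>t\<rfloor> + (if odd \<lfloor>2 * t\<rfloor> then 1 else 0)"
proof -
  have a: "2 * \<lfloor>t\<rfloor> \<le> \<lfloor>2 * t\<rfloor>" by linarith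
  have b: "\<lfloor>2 * t\<rfloor> \<le> 2 * \<lfloor>t\<rfloor> + 1" by linarith
  from a b show ?thesis by (cases "\<lfloor>2 * t\<rfloor> = 2 * \<lfloor>t\<rfloor>") auto
qed

lemma bv_exists:
  assumes "0 \<le> y" "y \<le> (1::real)"
  shows "\<exists>v. bin_val v = y"
proof (cases "y = 1")
  case True
  have "(\<lambda>n. (if True then 1 else 0) * (1/2::real)^Suc n) sums 1" using geom_half by simp
  hence "bin_val (\<lambda>_. True) = 1" unfolding bin_val_def using sums_unique by metis
  thus ?thesis using True by blast
next
  case False
  hence y1: "y < 1" using assms by auto
  define v where "v n = odd \<lfloor>2^Suc n * y\<rfloor>" for n
  have ps: "(\<Sum>n<m. dg v n) = \<lfloor>2^m * y\<rfloor> / 2^m" for m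
  proof (induction m)
    case 0
    have "\<lfloor>y\<rfloor> = 0" using assms y1 by (simp add: floor_eq_iff)
    thus ?case by simp
  next
    case (Suc m)
    have fd: "\<lfloor>2^Suc m * y\<rfloor> = 2 * \<lfloor>2^m * y\<rfloor> + (if v m then 1 else 0)"
      using floor_double[of "2^m * y"] by (simp add: v_def mult.assoc)
    have fd': "real_of_int \<lfloor>2^Suc m * y\<rfloor> = 2 * real_of_int \<lfloor>2^m * y\<rfloor> + (if v m then 1 else 0)"
      using fd by simp
    have ar: "\<And>a b::real. a / 2^m + b * (1/2)^Suc m = (2*a+b) / 2^Suc m"
      by (simp add: field_simps power_divide)
    have "(\<Sum>n<Suc m. dg v n) = \<lfloor>2^m*y\<rfloor>/2^m + (if v m then 1 else 0) * (1/2)^Suc m"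
      using Suc by (simp add: dg_def)
    also have "\<dots> = \<lfloor>2^Suc m * y\<rfloor> / 2^Suc m" unfolding ar fd' by simp
    finally show ?case .
  qed
  have "(\<lambda>m. \<lfloor>2^m * y\<rfloor> / 2^m) \<longlonglongrightarrow> y"
  proof (rule tendsto_sandwich[of "\<lambda>m. y - (1/2)^m" _ _ "\<lambda>_. y"])
    show "\<forall>\<^sub>F m in sequentially. y - (1/2)^m \<le> \<lfloor>2^m * y\<rfloor> / 2^m"
    proof (intro always_eventually allI)
      fix m :: nat
      have "2^m * y - 1 \<le> \<lfloor>2^m * y\<rfloor>" by linarith
      hence "(2^m * y - 1) / 2^m \<le> \<lfloor>2^m * y\<rfloor> / (2::real)^m" by (simp add: divide_right_mono)
      thus "y - (1/2)^m \<le> \<lfloor>2^m * y\<rfloor> / 2^m" by (simp add: field_simps power_divide)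
    qed
    show "\<forall>\<^sub>F m in sequentially. \<lfloor>2^m * y\<rfloor> / 2^m \<le> y"
      by (intro always_eventually allI) (simp add: divide_le_eq mult.commute)
    show "(\<lambda>m. y - (1/2::real)^m) \<longlonglongrightarrow> y"
      using tendsto_diff[OF tendsto_const LIMSEQ_power_zero[of "1/2::real"]] by simp
  qed simp
  hence "dg v sums y" unfolding sums_def using ps by simp
  thus ?thesis using bv_def2 sums_unique by metis
qed


lemma concat_cons:
  "concat_word (case_nat x u) n = (if n < length x then x ! n else concat_word u (n - length x))"
proof -
  have S: "\<And>i. (\<Sum>l<Suc i. length (case_nat x u l)) = length x + (\<Sum>l<i. length (u l))"
    by (simp only: sum.lessThan_Suc_shift) simp
  show ?thesis
  proof (cases "n < length x")
    case True
    have "concat_word (case_nat x u) n = x ! n"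
    proof
      assume "concat_word (case_nat x u) n"
      then obtain i j where ij: "j < length (case_nat x u i)"
        "n = (\<Sum>l<i. length (case_nat x u l)) + j" "case_nat x u i ! j"
        unfolding concat_word_def by blast
      show "x ! n"
      proof (cases i)
        case 0 thus ?thesis using ij by simp
      next
        case (Suc i') thus ?thesis using ij S[of i'] True by simp
      qed
    next
      assume "x ! n" thus "concat_word (case_nat x u) n"
        unfolding concat_word_def using True by (intro exI[of _ 0] exI[of _ n]) simp
    qed
    thus ?thesis using True by simp
  next
    case False
    have "concat_word (case_nat x u) n = concat_word u (n - length x)"
    proof
      assume "concat_word (case_nat x u) n"
      then obtain i j where ij: "j < length (case_nat x u i)"
        "n = (\<Sum>l<i. length (case_nat x u l)) + j" "case_nat x u i ! j"
        unfolding concat_word_def by blast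
      show "concat_word u (n - length x)"
      proof (cases i)
        case 0 thus ?thesis using ij False by simp
      next
        case (Suc i')
        thus ?thesis using ij S[of i'] unfolding concat_word_def
          by (intro exI[of _ i'] exI[of _ j]) simp
      qed
    next
      assume "concat_word u (n - length x)"
      then obtain i j where ij: "j < length (u i)"
        "n - length x = (\<Sum>l<i. length (u l)) + j" "u i ! j"
        unfolding concat_word_def by blast
      show "concat_word (case_nat x u) n"
        unfolding concat_word_def using ij S[of i] False
        by (intro exI[of _ "Suc i"] exI[of _ j]) simp
    qed
    thus ?thesis using False by simp
  qed
qed

lemma concat_zeros:
  "concat_word (\<lambda>i. if i < n then [] else u (i - n)) = concat_word u"
proof (induction n)
  case 0 thus ?case by simp
next
  case (Suc n)
  have "(\<lambda>i. if i < Suc n then [] else u (i - Suc n)) = case_nat [] (\<lambda>i. if i < n then [] else u (i - n))"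
    by (rule ext) (simp split: nat.split)
  thus ?case using Suc by (simp add: fun_eq_iff concat_cons)
qed

lemma concat_ileave:
  assumes "\<forall>i. u i \<noteq> []"
  shows "concat_word (\<lambda>m. if even m then u (m div 2) else []) n = concat_word u n"
  using assms
proof (induction n arbitrary: u rule: less_induct)
  case (less n)
  have e1: "(\<lambda>m. if even m then u (m div 2) else []) =
    case_nat (u 0) (case_nat [] (\<lambda>m. if even m then u (Suc (m div 2)) else []))"
  proof (rule ext)
    fix m show "(if even m then u (m div 2) else []) =
      case_nat (u 0) (case_nat [] (\<lambda>m. if even m then u (Suc (m div 2)) else [])) m"
    proof (cases m)
      case 0 thus ?thesis by simp
    next
      case (Suc m') thus ?thesis by (cases m') auto
    qed
  qed
  have e2: "u = case_nat (u 0) (\<lambda>i. u (Suc i))" by (rule ext) (simp split: nat.split)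
  have pos: "0 < length (u 0)" using less.prems by auto
  show ?case
  proof (cases "n < length (u 0)")
    case True thus ?thesis by (subst e1, subst e2) (simp add: concat_cons)
  next
    case False
    have "concat_word (\<lambda>m. if even m then u (Suc (m div 2)) else []) (n - length (u 0))
        = concat_word (\<lambda>i. u (Suc i)) (n - length (u 0))"
      using less.IH[of "n - length (u 0)" "\<lambda>i. u (Suc i)"] less.prems pos False by auto
    thus ?thesis using False by (subst e1, subst e2) (simp add: concat_cons)
  qed
qed

lemma window:
  assumes "0 < k" "r < (k::nat)"
  shows "\<exists>i'. i \<le> i' \<and> i' < i + k \<and> i' mod k = r"
proof -
  define q where "q = i div k"
  have a1: "q * k \<le> i" unfolding q_def using div_mult_mod_eq[of i k] by linarith
  have a2: "i < q * k + k" unfolding q_def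
    using assms div_mult_mod_eq[of i k] mod_less_divisor[of k i] by linarith
  show ?thesis
  proof (cases "i \<le> q * k + r")
    case True thus ?thesis using a1 a2 assms by (intro exI[of _ "r + q*k"]) auto
  next
    case False
    have m: "(r + (q+1)*k) mod k = r" using assms by (simp only: mod_mult_self1) simp
    thus ?thesis using False a1 a2 assms by (intro exI[of _ "r + (q+1)*k"]) auto
  qed
qed

lemma exp_eq:
  assumes "\<forall>N. \<exists>m\<ge>N. W m"
  shows "expansion (bin_val W) = W"
  unfolding expansion_def
proof (rule the_equality)
  show "(\<forall>n. \<exists>m\<ge>n. W m) \<and> bin_val W = bin_val W" using assms by auto
next
  fix W' assume h: "(\<forall>n. \<exists>m\<ge>n. W' m) \<and> bin_val W' = bin_val W"
  show "W' = W"
  proof (rule ccontr)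
    assume "W' \<noteq> W"
    hence "\<exists>j. W' j \<noteq> W j" by auto
    then obtain j where j: "W' j \<noteq> W j" and mn: "\<forall>m<j. \<not> (W' m \<noteq> W m)"
      using exists_least_iff[of "\<lambda>j. W' j \<noteq> W j"] by blast
    hence ag: "\<forall>m<j. W' m = W m" "\<forall>m<j. W m = W' m" by auto
    show False
    proof (cases "W j")
      case True
      obtain i where "i \<ge> Suc j" "W i" using assms by blast
      hence i: "j < i" "W i" by auto
      have nW: "\<not> W' j" using j True by auto
      have "bin_val W' < bin_val W" using bv_less[OF ag(2) True nW i] .
      thus False using h by simp
    next
      case False
      obtain i where "i \<ge> Suc j" "W' i" using h by blast
      hence i: "j < i" "W' i" by auto
      have nW: "W' j" using j False by auto
      have "bin_val W < bin_val W'" using bv_less[OF ag(1) nW False i] .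
      thus False using h by simp
    qed
  qed
qed



theorem lemma4p9:
  fixes k :: nat and \<sigma> :: "bool list \<Rightarrow> bool list"
  assumes "k \<ge> 2"
    and "erasing_block_subst k \<sigma>"
    and "w_eps k \<sigma> \<noteq> replicate k True"
    and "optimal k \<sigma>"
  shows "almost_fixed_point (f_sigma k \<sigma>) (bin_val (omega_word (w_eps k \<sigma>)))"
proof -
  define w where "w = w_eps k \<sigma>"
  define V where "V = omega_word w"
  define x0 where "x0 = bin_val V"
  have k0: "0 < k" using assms(1) by auto
  have hw: "length w = k \<and> \<sigma> w = []"
    using assms(2) unfolding erasing_block_subst_def w_def w_eps_def by (rule theI')
  have lw: "length w = k" and sw: "\<sigma> w = []" using hw by auto
  have Vn: "V n = w ! (n mod k)" for n by (simp add: V_def omega_word_def lw)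
  have Vik: "V (i*k + r) = w ! r" if "r < k" for i r using that by (simp add: Vn)
  obtain r0 where r0: "r0 < k" "\<not> w ! r0"
  proof -
    have "\<exists>r<k. \<not> w ! r"
    proof (rule ccontr)
      assume "\<not> (\<exists>r<k. \<not> w ! r)"
      hence "w = replicate k True" using lw by (intro nth_equalityI) auto
      thus False using assms(3) w_def by simp
    qed
    thus ?thesis using that by blast
  qed
  have z: "\<forall>i. \<exists>i'. i \<le> i' \<and> i' < i + k \<and> \<not> V i'"
  proof
    fix i obtain i' where "i \<le> i'" "i' < i + k" "i' mod k = r0" using window[OF k0 r0(1)] by blast
    thus "\<exists>i'. i \<le> i' \<and> i' < i + k \<and> \<not> V i'" using r0 Vn by auto
  qed
  have o: "(\<forall>i. \<exists>i'. i \<le> i' \<and> i' < i + k \<and> V i') \<or> (\<forall>i. \<not> V i)"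
  proof (cases "\<exists>r<k. w ! r")
    case True
    then obtain r where r: "r < k" "w ! r" by blast
    have "\<forall>i. \<exists>i'. i \<le> i' \<and> i' < i + k \<and> V i'"
    proof
      fix i obtain i' where "i \<le> i'" "i' < i + k" "i' mod k = r" using window[OF k0 r(1)] by blast
      thus "\<exists>i'. i \<le> i' \<and> i' < i + k \<and> V i'" using r Vn by auto
    qed
    thus ?thesis by blast
  next
    case False
    thus ?thesis using Vn k0 by auto
  qed
  obtain b where b: "\<forall>i. length (b i) = k \<and> \<sigma> (b i) \<noteq> []"
    and Vb: "V = concat_word (\<lambda>i. \<sigma> (b i))"
    using assms(4) unfolding optimal_def by blast
  define p where "p = \<sigma> (b 0)"
  define L where "L = length p"
  have L0: "0 < L" using b by (auto simp: L_def p_def)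
  have Vp: "V j = p ! j" if "j < L" for j
  proof -
    have "(\<lambda>i. \<sigma> (b i)) = case_nat p (\<lambda>i. \<sigma> (b (Suc i)))"
      by (rule ext) (simp add: p_def split: nat.split)
    thus ?thesis using Vb that by (simp add: concat_cons L_def)
  qed
  have b0w: "b 0 \<noteq> w" using b sw by metis
  have lb0: "length (b 0) = k" using b by auto
  obtain j0 where j0: "j0 < k" "b 0 ! j0 \<noteq> w ! j0" and j0m: "\<forall>j<j0. b 0 ! j = w ! j"
  proof -
    have "\<exists>j. j < k \<and> b 0 ! j \<noteq> w ! j"
      using b0w lb0 lw by (auto simp: list_eq_iff_nth_eq)
    then obtain j where "j < k \<and> b 0 ! j \<noteq> w ! j" "\<forall>m<j. \<not> (m < k \<and> b 0 ! m \<noteq> w ! m)"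
      using exists_least_iff[of "\<lambda>j. j < k \<and> b 0 ! j \<noteq> w ! j"] by blast
    thus ?thesis using that by auto
  qed
  define s where "s = b 0 ! j0"
  define \<delta> :: real where "\<delta> = (1/2)^(L + k)"
  define U where "U = {0..1::real} \<inter> ball x0 \<delta>"
  have x01: "x0 \<in> {0..1}" using bv_nonneg bv_le1 by (simp add: x0_def)
  have \<delta>0: "0 < \<delta>" by (simp add: \<delta>_def)
  have openU: "openin (top_of_set {0..1}) U" unfolding U_def by (rule openin_open_Int) simp
  have x0U: "x0 \<in> U" using x01 \<delta>0 by (simp add: U_def)
  have key: "\<exists>t\<in>{0..1}. (if s then x0 < t \<and> t < x0 + e else x0 - e < t \<and> t < x0)
               \<and> f_sigma k \<sigma> t = y" if yU: "y \<in> U" and e0: "0 < e" for y e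
  proof -
    have y01: "0 \<le> y" "y \<le> 1" using yU by (auto simp: U_def)
    obtain v where v: "bin_val v = y" using bv_exists[OF y01] by blast
    have "\<bar>bin_val v - bin_val V\<bar> < (1/2)^(L + k)"
      using yU v by (auto simp: U_def x0_def \<delta>_def dist_real_def abs_minus_commute)
    hence vV: "\<forall>j<L. v j = V j" by (rule cylinder[OF z o])
    define rest where "rest = (\<lambda>n. v (n + L))"
    obtain c where c: "\<forall>i. length (c i) = k \<and> \<sigma> (c i) \<noteq> []"
      and rc: "rest = concat_word (\<lambda>i. \<sigma> (c i))"
      using assms(4) unfolding optimal_def by blast
    obtain n where n: "(1/2::real)^n < e" using real_arch_pow_inv[OF e0, of "1/2"] by auto
    have nk: "(1/2::real)^(n*k) < e"
    proof -
      have "(1/2::real)^(n*k) \<le> (1/2)^n" by (rule power_decreasing) (use k0 in auto)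
      thus ?thesis using n by linarith
    qed
    define D where "D = case_nat (b 0) (\<lambda>m. if even m then c (m div 2) else w)"
    define B where "B i = (if i < n then w else D (i - n))" for i
    define W where "W j = B (j div k) ! (j mod k)" for j
    have lD: "length (D i) = k" for i using b c lw by (auto simp: D_def split: nat.split)
    have lB: "length (B i) = k" for i using lD lw by (simp add: B_def)
    have Wik: "W (i*k + r) = B i ! r" if "r < k" for i r using that by (simp add: W_def)
    have blk: "block k W i = B i" for i
    proof -
      have "block k W i = map (\<lambda>j. B i ! j) [0..<k]" unfolding block_def by (simp add: Wik)
      also have "\<dots> = B i" using map_nth[of "B i"] lB[of i] by simp
      finally show ?thesis .
    qed
    have cw: "concat_word (\<lambda>i. \<sigma> (block k W i)) = v"
    proof -
      have e1: "(\<lambda>i. \<sigma> (block k W i)) = (\<lambda>i. if i < n then [] else (\<lambda>i. \<sigma> (D i)) (i - n))"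
        by (rule ext) (simp add: blk B_def sw)
      have e2: "(\<lambda>i. \<sigma> (D i)) = case_nat p (\<lambda>m. if even m then \<sigma> (c (m div 2)) else [])"
        by (rule ext) (simp add: D_def p_def sw split: nat.split)
      have cn: "\<forall>i. \<sigma> (c i) \<noteq> []" using c by auto
      show ?thesis
      proof (rule ext)
        fix j
        have "concat_word (\<lambda>i. \<sigma> (block k W i)) j = concat_word (\<lambda>i. \<sigma> (D i)) j"
          using concat_zeros[of n "\<lambda>i. \<sigma> (D i)"] e1 by simp
        also have "\<dots> = (if j < L then p ! j else concat_word (\<lambda>i. \<sigma> (c i)) (j - L))"
          unfolding e2 concat_cons concat_ileave[OF cn] L_def ..
        also have "\<dots> = v j"
        proof (cases "j < L")
          case True thus ?thesis using vV Vp by auto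
        next
          case False
          have "concat_word (\<lambda>i. \<sigma> (c i)) (j - L) = v (j - L + L)"
            using fun_cong[OF rc, of "j - L"] by (simp add: rest_def)
          thus ?thesis using False by simp
        qed
        finally show "concat_word (\<lambda>i. \<sigma> (block k W i)) j = v j" .
      qed
    qed
    have inf: "\<forall>N. \<exists>m\<ge>N. W m"
    proof
      fix N
      define i where "i = n + 2*N + 1"
      have Bi: "B i = c N" by (simp add: B_def D_def i_def)
      have Bi1: "B (Suc i) = w" by (simp add: B_def D_def i_def)
      have "c N \<noteq> w" using c sw by metis
      have "\<exists>r<k. c N ! r \<noteq> w ! r"
      proof (rule ccontr)
        assume "\<not> (\<exists>r<k. c N ! r \<noteq> w ! r)"
        hence "c N = w" using c lw by (intro nth_equalityI) auto
        thus False using \<open>c N \<noteq> w\<close> by simp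
      qed
      then obtain r where r: "r < k" "c N ! r \<noteq> w ! r" by blast
      have "N \<le> i" unfolding i_def by simp
      moreover have "i \<le> i * k" using k0 by simp
      ultimately have ge: "N \<le> i * k" by linarith
      show "\<exists>m\<ge>N. W m"
      proof (cases "c N ! r")
        case True thus ?thesis using Wik[OF r(1), of i] Bi ge by (intro exI[of _ "i*k + r"]) auto
      next
        case False
        hence "w ! r" using r by auto
        thus ?thesis using Wik[OF r(1), of "Suc i"] Bi1 ge by (intro exI[of _ "Suc i*k + r"]) auto
      qed
    qed
    define t where "t = bin_val W"
    have expt: "expansion t = W" unfolding t_def by (rule exp_eq[OF inf])
    have t01: "0 < t" "t \<le> 1" using inf bv_pos bv_le1 by (auto simp: t_def)
    have Wnj: "W (n*k + j0) = s" using Wik[OF j0(1), of n] by (simp add: B_def D_def s_def)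
    have Vnj: "V (n*k + j0) = w ! j0" using Vik[OF j0(1)] by simp
    have WV: "W \<noteq> V" using Wnj Vnj j0 s_def by metis
    have ft: "f_sigma k \<sigma> t = y"
      using t01 WV expt cw v by (simp add: f_sigma_def w_def[symmetric] V_def[symmetric])
    have agree: "\<forall>m < n*k + j0. W m = V m"
    proof (intro allI impI)
      fix m assume m: "m < n*k + j0"
      have mk: "m = (m div k) * k + m mod k" by simp
      have mod: "m mod k < k" using k0 by simp
      show "W m = V m"
      proof (cases "m < n*k")
        case True
        hence "m div k < n" by (simp add: less_mult_imp_div_less)
        thus ?thesis using Wik[OF mod, of "m div k"] Vik[OF mod, of "m div k"] mk
          by (simp add: B_def)
      next
        case False
        define r where "r = m - n*k"
        have r: "r < j0" "m = n*k + r" using False m by (auto simp: r_def)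
        thus ?thesis using Wik[of r n] Vik[of r n] j0 j0m by (simp add: B_def D_def)
      qed
    qed
    have close: "\<bar>t - x0\<bar> \<le> (1/2)^(n*k)"
      unfolding t_def x0_def by (rule bv_close) (use agree in auto)
    have side: "if s then x0 < t else t < x0"
    proof (cases s)
      case True
      obtain i where "i \<ge> Suc (n*k + j0)" "W i" using inf by blast
      hence "bin_val V < bin_val W"
        using bv_less[OF agree, of i] Wnj Vnj True j0 s_def by auto
      thus ?thesis using True by (simp add: t_def x0_def)
    next
      case False
      hence wj: "w ! j0" using j0 s_def by auto
      have Vi: "V ((Suc n)*k + j0)" using Vik[OF j0(1), of "Suc n"] wj by simp
      have agree': "\<forall>m < n*k + j0. V m = W m" using agree by auto
      have "bin_val W < bin_val V"
        using bv_less[OF agree', of "(Suc n)*k + j0"] Vi Wnj Vnj wj False j0 by auto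
      thus ?thesis using False by (simp add: t_def x0_def)
    qed
    show ?thesis
      using t01 side close nk ft by (intro bexI[of _ t]) (auto split: if_splits)
  qed
  show ?thesis
  proof (cases s)
    case True
    have "U \<subseteq> R_plus (f_sigma k \<sigma>) x0"
      unfolding R_plus_def using key True by auto
    hence "x0 \<in> (top_of_set {0..1}) interior_of (R_plus (f_sigma k \<sigma>) x0)"
      unfolding interior_of_def using openU x0U by blast
    thus ?thesis unfolding almost_fixed_point_def x0_def V_def w_def by blast
  next
    case False
    have "U \<subseteq> R_minus (f_sigma k \<sigma>) x0"
      unfolding R_minus_def using key False by auto
    hence "x0 \<in> (top_of_set {0..1}) interior_of (R_minus (f_sigma k \<sigma>) x0)"
      unfolding interior_of_def using openU x0U by blast
    thus ?thesis unfolding almost_fixed_point_def x0_def V_def w_def by blast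
  qed
qed


end
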